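(* Let $n\ge1$, let $F$ be a permutation of $\mathbb{F}_{2^n}$ with Carlitz rank $m$, and let $c\in\mathbb{F}_{2^n}$ with $c\neq1$. Then ${}_c\Delta_F\le m+2$.
   Context: Every permutation $F$ of $\mathbb{F}_{2^n}$ can be written, for some $m\ge0$ and $a_0,\dots,a_{m+1}\in\mathbb{F}_{2^n}$ with $a_0,a_2,\dots,a_m\neq0$, as $F(x)=(\cdots((a_0x+a_1)^{2^n-2}+a_2)^{2^n-2}\cdots+a_m)^{2^n-2}+a_{m+1}$. The Carlitz rank of $F$ is the least such $m$. For $F:\mathbb{F}_{2^n}\to\mathbb{F}_{2^n}$ and $c\in\mathbb{F}_{2^n}$, ${}_cD_aF(x)=F(x+a)+cF(x)$; ${}_c\Delta_F(a,b)$ is the number of $x\in\mathbb{F}_{2^n}$ with ${}_cD_aF(x)=b$; and ${}_c\Delta_F=\max\{{}_c\Delta_F(a,b): a,b\in\mathbb{F}_{2^n},\ a\neq 0 \text{ if } c=1\}$. *)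

theory Defs
  imports Main "HOL-Library.Cardinality"
begin

text \<open>The field F_{2^n} is modelled as a finite field type 'a with CARD('a) = 2^n.
  The exponent 2^n - 2 is CARD('a) - 2.\<close>

text \<open>Carlitz form: given a0, a1 and the list [a2, ..., a_(m+1)] (of length m),
  compute (...((a0 x + a1)^(q-2) + a2)^(q-2) ... + a_m)^(q-2) + a_(m+1).\<close>
definition carlitz_form :: "'a::{field,finite} \<Rightarrow> 'a \<Rightarrow> 'a list \<Rightarrow> 'a \<Rightarrow> 'a" where
  "carlitz_form a0 a1 as x =
     foldl (\<lambda>y a. y ^ (CARD('a) - 2) + a) (a0 * x + a1) as"

definition has_carlitz_rep :: "('a::{field,finite} \<Rightarrow> 'a) \<Rightarrow> nat \<Rightarrow> bool" where
  "has_carlitz_rep F m \<longleftrightarrow>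
     (\<exists>a0 a1 as. a0 \<noteq> 0 \<and> length as = m \<and> (\<forall>i. i + 1 < m \<longrightarrow> as ! i \<noteq> 0) \<and>
        F = carlitz_form a0 a1 as)"

definition carlitz_rank :: "('a::{field,finite} \<Rightarrow> 'a) \<Rightarrow> nat" where
  "carlitz_rank F = (LEAST m. has_carlitz_rep F m)"

definition c_diff_count :: "('a::{field,finite} \<Rightarrow> 'a) \<Rightarrow> 'a \<Rightarrow> 'a \<Rightarrow> 'a \<Rightarrow> nat" where
  "c_diff_count F c a b = card {x. F (x + a) + c * F x = b}"

definition c_diff_uniformity :: "('a::{field,finite} \<Rightarrow> 'a) \<Rightarrow> 'a \<Rightarrow> nat" where
  "c_diff_uniformity F c =
     Max {c_diff_count F c a b | a b. a \<noteq> 0 \<or> c \<noteq> 1}"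

end

theory Submission
  imports Defs "HOL-Number_Theory.Residues" "HOL-Combinatorics.Permutations" "HOL-Computational_Algebra.Polynomial"
begin

lemma pow_card_same:
  fixes x :: "'a::{field,finite}"
  shows "x ^ CARD('a) = x"
proof (cases "x = 0")
  case False
  have "x * (\<Prod>y\<in>UNIV-{0}. x * y) = x * x ^ (card (UNIV :: 'a set) - 1) * \<Prod>(UNIV-{0})"
    by (simp add: prod.distrib mult_ac)
  also have "x * x ^ (card (UNIV :: 'a set) - 1) = x ^ Suc (card (UNIV :: 'a set) - 1)"
    by (subst power_Suc) auto
  also have "Suc (card (UNIV :: 'a set) - 1) = card (UNIV :: 'a set)"
    using finite_UNIV_card_ge_0[where ?'a = 'a] by simp
  also have "(\<Prod>y\<in>UNIV-{0}. x * y) = (\<Prod>y\<in>UNIV-{0}. y)"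
    by (rule prod.reindex_bij_witness[of _ "\<lambda>y. y / x" "\<lambda>y. x * y"]) (use False in auto)
  finally show ?thesis
    by simp
qed (use finite_UNIV_card_ge_0[where ?'a = 'a] in auto)

lemma inv_pow:
  fixes y :: "'a::{field,finite}"
  assumes "CARD('a) \<ge> 3"
  shows "y ^ (CARD('a) - 2) = inverse y"
proof (cases "y = 0")
  case True
  then show ?thesis using assms by simp
next
  case False
  obtain k where k: "CARD('a) = k + 3" using assms by (metis add.commute le_Suc_ex)
  have "y ^ CARD('a) = y ^ (CARD('a) - 2) * y * y"
    unfolding k by (simp add: numeral_3_eq_3 mult.assoc)
  hence "y ^ (CARD('a) - 2) * y * y = y" using pow_card_same by metis
  hence "y ^ (CARD('a) - 2) * y = 1" using False
    by (metis mult_cancel_right2)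
  hence "y * y ^ (CARD('a) - 2) = 1" by (simp add: mult.commute)
  then show ?thesis using inverse_unique by metis
qed

lemma char2:
  fixes x :: "'a::{field,finite}"
  assumes "CARD('a) = 2 ^ n" "n \<ge> 1"
  shows "x + x = 0"
proof -
  have pos: "CHAR('a) > 0" by (simp add: finite_imp_CHAR_pos)
  have pr: "prime CHAR('a)" using prime_CHAR_semidom[OF pos] .
  have "CHAR('a) dvd 2 ^ n" using CHAR_dvd_CARD[where 'a='a] assms by simp
  hence "CHAR('a) dvd 2" using pr prime_dvd_power by blast
  hence "CHAR('a) = 2" using pr primes_dvd_imp_eq two_is_prime_nat by blast
  hence "(of_nat 2 :: 'a) = 0" by (metis of_nat_CHAR)
  hence "(2::'a) = 0" by simp
  hence "2 * x = 0" by simp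
  thus ?thesis by (metis mult_2)
qed


definition cf :: "'a::field \<Rightarrow> 'a \<Rightarrow> 'a list \<Rightarrow> 'a \<Rightarrow> 'a" where
  "cf a0 a1 as x = foldl (\<lambda>y a. inverse y + a) (a0 * x + a1) as"

lemma cf_Nil [simp]: "cf a0 a1 [] x = a0 * x + a1"
  by (simp add: cf_def)

lemma cf_snoc [simp]: "cf a0 a1 (as @ [e]) x = inverse (cf a0 a1 as x) + e"
  by (simp add: cf_def)

lemma cf_append: "cf a0 a1 (as @ bs) x = foldl (\<lambda>y a. inverse y + a) (cf a0 a1 as x) bs"
  by (simp add: cf_def)

lemma carlitz_cf:
  assumes "CARD('a::{field,finite}) \<ge> 3"
  shows "carlitz_form (a0::'a) a1 as = cf a0 a1 as"
  by (rule ext) (simp add: carlitz_form_def cf_def inv_pow[OF assms])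

lemma cf_inj:
  assumes "a0 \<noteq> 0"
  shows "inj (cf a0 a1 as)"
proof (induction as rule: rev_induct)
  case Nil
  then show ?case using assms by (auto intro!: injI)
next
  case (snoc e as)
  then show ?case by (auto intro!: injI dest: injD)
qed

definition rel :: "'a::field \<Rightarrow> 'a \<Rightarrow> 'a \<Rightarrow> 'a \<Rightarrow> 'a \<Rightarrow> 'a \<Rightarrow> bool" where
  "rel al be ga de y y' \<longleftrightarrow> ga * y + de \<noteq> 0 \<and> y' * (ga * y + de) = al * y + be"

lemma rel_step:
  fixes y y' :: "'a::field"
  assumes "y \<noteq> 0" "y' \<noteq> 0" "rel al be ga de (inverse y + e) (inverse y' + e)"
  shows "rel (ga*e+de) ga (al*e+be - e*(ga*e+de)) (al - e*ga) y y'"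
proof -
  have h1: "ga * (inverse y + e) + de \<noteq> 0"
   and h2: "(inverse y' + e) * (ga * (inverse y + e) + de) = al * (inverse y + e) + be"
    using assms(3) unfolding rel_def by auto
  have h1': "ga + (ga*e+de) * y \<noteq> 0"
  proof
    assume "ga + (ga*e+de) * y = 0"
    hence "(ga + (ga*e+de) * y) / y = 0" by simp
    hence "ga * (inverse y + e) + de = 0" using assms(1) by (simp add: field_simps)
    thus False using h1 by simp
  qed
  have A1: "y * (ga * (inverse y + e) + de) = ga + (ga*e+de)*y" using assms(1) by (simp add: field_simps)
  have A2: "y' * (inverse y' + e) = 1 + e*y'" using assms(2) by (simp add: field_simps)
  have A3: "y * (al * (inverse y + e) + be) = al + (al*e+be)*y" using assms(1) by (simp add: field_simps)
  have "(y' * (inverse y' + e)) * (y * (ga * (inverse y + e) + de)) = y' * (y * (al * (inverse y + e) + be))"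
    using h2 by (metis mult.assoc mult.left_commute)
  hence eq: "(1 + e*y') * (ga + (ga*e+de)*y) = y' * (al + (al*e+be)*y)"
    unfolding A1 A2 A3 .
  have eq2: "y' * ((al*e+be - e*(ga*e+de)) * y + (al - e*ga)) = (ga*e+de) * y + ga"
    using eq by (simp add: algebra_simps)
  have "(al*e+be - e*(ga*e+de)) * y + (al - e*ga) \<noteq> 0"
  proof
    assume "(al*e+be - e*(ga*e+de)) * y + (al - e*ga) = 0"
    hence "(ga*e+de) * y + ga = 0" using eq2 by simp
    thus False using h1' by (simp add: add.commute)
  qed
  thus ?thesis unfolding rel_def using eq2 by simp
qed

lemma rel_exc:
  fixes w :: "'a::field"
  assumes "w \<noteq> 0" "rel al be ga de e (inverse w + e)" "rel al be ga de (inverse w + e) e"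
  shows "al + de = 0"
proof -
  have h1: "(inverse w + e) * (ga * e + de) = al * e + be"
   and h2: "e * (ga * (inverse w + e) + de) = al * (inverse w + e) + be"
    using assms(2,3) unfolding rel_def by auto
  have A1: "w * (inverse w + e) = 1 + e*w" using assms(1) by (simp add: field_simps)
  have A2: "w * (ga * (inverse w + e) + de) = ga + w * (ga*e+de)" using assms(1) by (simp add: field_simps)
  have A3: "w * (al * (inverse w + e) + be) = al + w * (al*e+be)" using assms(1) by (simp add: field_simps)
  have "(w * (inverse w + e)) * (ga * e + de) = w * (al * e + be)" using h1 by (simp add: mult.assoc)
  hence e1: "(1 + e*w) * (ga*e+de) = w * (al*e+be)" unfolding A1 .
  have "e * (w * (ga * (inverse w + e) + de)) = w * (al * (inverse w + e) + be)" using h2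
    by (metis mult.left_commute)
  hence e2: "e * (ga + w * (ga*e+de)) = al + w * (al*e+be)" unfolding A2 A3 .
  show ?thesis using e1 e2 by (simp add: algebra_simps)
qed


lemma base_bound:
  fixes a0 :: "'a::{field,finite}"
  assumes c2: "\<And>x::'a. x + x = 0" and a0: "a0 \<noteq> 0" and tr: "al + de \<noteq> 0"
  shows "card {x. rel al be ga de (cf a0 a1 [] x) (cf a0 a1 [] (x+a))} \<le> 2"
proof -
  define t where "t = a0 * a"
  define p where "p = [: t*de - be, ga*t + de - al, ga :]"
  have pnz: "p \<noteq> 0"
  proof
    assume "p = 0"
    hence g0: "ga = 0" and h: "ga*t + de - al = 0" unfolding p_def by auto
    have "de - al = 0" using h unfolding g0 by simp
    hence "de = al" by simp
    hence "al + de = 0" using c2 by simp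
    thus False using tr by simp
  qed
  have deg: "degree p \<le> 2" unfolding p_def
    by (metis (no_types) degree_pCons_le le_trans Suc_le_mono numeral_2_eq_2 One_nat_def degree_pCons_0 le_SucI)
  let ?S = "{x. rel al be ga de (cf a0 a1 [] x) (cf a0 a1 [] (x+a))}"
  have sub: "?S \<subseteq> (\<lambda>y. (y - a1) / a0) ` {y. poly p y = 0}"
  proof
    fix x assume "x \<in> ?S"
    hence r: "rel al be ga de (a0*x+a1) (a0*x+a1 + t)" by (simp add: t_def algebra_simps)
    define y where "y = a0*x+a1"
    have "(y + t) * (ga*y+de) = al*y+be" using r unfolding rel_def y_def by simp
    hence "poly p y = 0" unfolding p_def by (simp add: algebra_simps power2_eq_square)
    moreover have "x = (y - a1)/a0" using a0 unfolding y_def by (simp add: field_simps)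
    ultimately show "x \<in> (\<lambda>y. (y - a1) / a0) ` {y. poly p y = 0}" by blast
  qed
  have "card ?S \<le> card ((\<lambda>y. (y - a1) / a0) ` {y. poly p y = 0})"
    by (rule card_mono[OF _ sub]) simp
  also have "\<dots> \<le> card {y. poly p y = 0}" by (rule card_image_le) simp
  also have "\<dots> \<le> degree p" by (rule card_poly_roots_bound[OF pnz])
  finally show ?thesis using deg by simp
qed

lemma step_bound:
  fixes G :: "'a::{field,finite} \<Rightarrow> 'a"
  assumes c2: "\<And>x::'a. x + x = 0" and injG: "inj G"
    and IH: "\<And>al be ga de. al + de \<noteq> 0 \<Longrightarrow> card {x. rel al be ga de (G x) (G (x+a))} \<le> k"
    and tr: "al + de \<noteq> 0"
  shows "card {x. rel al be ga de (inverse (G x) + e) (inverse (G (x+a)) + e)} \<le> k + 1"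
proof -
  let ?S = "{x. rel al be ga de (inverse (G x) + e) (inverse (G (x+a)) + e)}"
  define al' where "al' = ga*e+de"
  define be' where "be' = ga"
  define ga' where "ga' = al*e+be - e*(ga*e+de)"
  define de' where "de' = al - e*ga"
  have tr': "al' + de' \<noteq> 0" using tr unfolding al'_def de'_def by (simp add: algebra_simps)
  let ?T = "{x. rel al' be' ga' de' (G x) (G (x+a))}"
  have surj: "surj G" using finite_UNIV_inj_surj[of G] injG by simp
  then obtain z where z: "G z = 0" by (metis surjD)
  have aa: "\<And>x. x + a + a = x" using c2 by (simp add: add.assoc)
  have sub: "?S \<subseteq> ?T \<union> (?S \<inter> {z, z+a})"
  proof
    fix x assume xS: "x \<in> ?S"
    show "x \<in> ?T \<union> (?S \<inter> {z, z+a})"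
    proof (cases "x = z \<or> x = z + a")
      case True then show ?thesis using xS by auto
    next
      case False
      have "G x \<noteq> 0" using False z injG by (metis injD)
      moreover have "G (x+a) \<noteq> 0"
      proof
        assume "G (x+a) = 0"
        hence "x + a = z" using z injG by (metis injD)
        hence "x = z + a" using aa by metis
        thus False using False by simp
      qed
      ultimately have "x \<in> ?T" using xS rel_step[of "G x" "G (x+a)" al be ga de e]
        unfolding al'_def be'_def ga'_def de'_def by simp
      thus ?thesis by simp
    qed
  qed
  have exc: "card (?S \<inter> {z, z+a}) \<le> 1"
  proof (cases "a = 0")
    case True
    thus ?thesis by (simp add: card_le_Suc0_iff_eq)
  next
    case False
    have w: "G (z + a) \<noteq> 0"
    proof
      assume "G (z+a) = 0"
      hence "z + a = z" using z injG by (metis injD)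
      thus False using False by simp
    qed
    have "\<not> (z \<in> ?S \<and> z + a \<in> ?S)"
    proof
      assume both: "z \<in> ?S \<and> z + a \<in> ?S"
      have r1: "rel al be ga de e (inverse (G (z+a)) + e)" using both z by simp
      have r2: "rel al be ga de (inverse (G (z+a)) + e) e" using both z aa[of z] by simp
      show False using rel_exc[OF w r1 r2] tr by simp
    qed
    hence "?S \<inter> {z, z+a} \<subseteq> {z} \<or> ?S \<inter> {z, z+a} \<subseteq> {z+a}" by blast
    thus ?thesis
    proof
      assume h: "?S \<inter> {z, z+a} \<subseteq> {z}"
      have "card (?S \<inter> {z, z+a}) \<le> card {z}" by (rule card_mono[OF _ h]) simp
      thus ?thesis by simp
    next
      assume h: "?S \<inter> {z, z+a} \<subseteq> {z+a}"
      have "card (?S \<inter> {z, z+a}) \<le> card {z+a}" by (rule card_mono[OF _ h]) simp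
      thus ?thesis by simp
    qed
  qed
  have "card ?S \<le> card (?T \<union> (?S \<inter> {z, z+a}))" by (rule card_mono[OF _ sub]) simp
  also have "\<dots> \<le> card ?T + card (?S \<inter> {z, z+a})" by (rule card_Un_le)
  also have "\<dots> \<le> k + 1"
  proof -
    have "card ?T \<le> k" by (rule IH[OF tr'])
    thus ?thesis using exc by linarith
  qed
  finally show ?thesis .
qed

lemma main_bound:
  fixes a0 :: "'a::{field,finite}"
  assumes c2: "\<And>x::'a. x + x = 0" and a0: "a0 \<noteq> 0"
  shows "al + de \<noteq> 0 \<Longrightarrow> card {x. rel al be ga de (cf a0 a1 as x) (cf a0 a1 as (x+a))} \<le> length as + 2"
proof (induction as arbitrary: al be ga de rule: rev_induct)
  case Nil
  have "card {x. rel al be ga de (cf a0 a1 [] x) (cf a0 a1 [] (x+a))} \<le> 2"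
    by (rule base_bound[OF c2 a0 Nil])
  then show ?case by simp
next
  case (snoc e as)
  have "card {x. rel al be ga de (inverse (cf a0 a1 as x) + e) (inverse (cf a0 a1 as (x+a)) + e)}
        \<le> (length as + 2) + 1"
    by (rule step_bound[OF c2 cf_inj[OF a0] snoc.IH snoc.prems])
  then show ?case by simp
qed


lemma cf_affine_post:
  fixes a0 :: "'a::field"
  assumes "a0 \<noteq> 0"
  shows "u \<noteq> 0 \<Longrightarrow> \<exists>b0 b1 bs. b0 \<noteq> 0 \<and> length bs = length as \<and> (\<forall>x. u * cf a0 a1 as x + v = cf b0 b1 bs x)"
proof (induction as arbitrary: u v rule: rev_induct)
  case Nil
  show ?case
    by (rule exI[of _ "u*a0"], rule exI[of _ "u*a1+v"], rule exI[of _ "[]"])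
       (simp add: Nil assms algebra_simps)
next
  case (snoc e as)
  have "inverse u \<noteq> 0" using snoc.prems by simp
  from snoc.IH[OF this, of 0] obtain b0 b1 bs where
    b: "b0 \<noteq> 0" "length bs = length as" "\<forall>x. inverse u * cf a0 a1 as x + 0 = cf b0 b1 bs x" by blast
  have "\<forall>x. u * cf a0 a1 (as @ [e]) x + v = cf b0 b1 (bs @ [u*e+v]) x"
  proof
    fix x
    have "u * cf a0 a1 (as @ [e]) x + v = inverse (inverse u * cf a0 a1 as x) + (u*e+v)"
      by (simp add: inverse_mult_distrib algebra_simps)
    also have "\<dots> = cf b0 b1 (bs @ [u*e+v]) x" using b(3) by simp
    finally show "u * cf a0 a1 (as @ [e]) x + v = cf b0 b1 (bs @ [u*e+v]) x" .
  qed
  thus ?case using b(1,2) by (intro exI[of _ b0] exI[of _ b1] exI[of _ "bs @ [u*e+v]"]) simp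
qed

lemma cf_inner: "cf a0 a1 as (u*x+v) = cf (a0*u) (a0*v+a1) as x"
  by (simp add: cf_def algebra_simps)

definition inCF :: "('a::field \<Rightarrow> 'a) \<Rightarrow> bool" where
  "inCF f \<longleftrightarrow> (\<exists>a0 a1 as. a0 \<noteq> 0 \<and> f = cf a0 a1 as)"

lemma inCF_comp:
  assumes "inCF f" "inCF g"
  shows "inCF (f \<circ> g)"
proof -
  obtain a0 a1 as where f: "a0 \<noteq> 0" "f = cf a0 a1 as" using assms(1) unfolding inCF_def by blast
  obtain b0 b1 bs where g: "b0 \<noteq> 0" "g = cf b0 b1 bs" using assms(2) unfolding inCF_def by blast
  obtain c0 c1 cs where c: "c0 \<noteq> 0" "\<forall>x. a0 * cf b0 b1 bs x + a1 = cf c0 c1 cs x"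
    using cf_affine_post[OF g(1) f(1)] by blast
  have "f \<circ> g = cf c0 c1 (cs @ as)"
  proof
    fix x
    have "(f \<circ> g) x = foldl (\<lambda>y a. inverse y + a) (a0 * cf b0 b1 bs x + a1) as"
      using f g by (simp add: cf_def)
    also have "\<dots> = cf c0 c1 (cs @ as) x" using c(2) by (simp add: cf_append)
    finally show "(f \<circ> g) x = cf c0 c1 (cs @ as) x" .
  qed
  thus ?thesis using c(1) unfolding inCF_def by blast
qed

lemma transp01:
  fixes x :: "'a::field"
  assumes c2: "(1::'a) + 1 = 0"
  shows "transpose 0 1 x = cf 1 0 [1,1,1] x"
proof -
  have two: "(2::'a) = 0" using c2 by (simp add: one_add_one)
  consider "x = 0" | "x = 1" | "x \<noteq> 0" "x \<noteq> 1" by blast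
  then show ?thesis
  proof cases
    case 1 then show ?thesis using c2 by (simp add: cf_def)
  next
    case 2 then show ?thesis using c2 by (simp add: cf_def)
  next
    case 3
    have x1: "1 + x \<noteq> 0"
    proof
      assume "1 + x = 0"
      hence "x = (1 + x) + 1" using c2 by (metis add.commute add.left_commute add_0_right)
      thus False using 3 \<open>1 + x = 0\<close> by simp
    qed
    have s1: "inverse x + 1 = (1+x)/x" using 3 by (simp add: field_simps)
    have s2: "inverse ((1+x)/x) + 1 = 1/(1+x)"
    proof -
      have "inverse ((1+x)/x) + 1 = (x + (1 + x))/(1+x)" using 3 x1 by (simp add: field_simps)
      also have "x + (1 + x) = 1 + (x + x)" by (simp add: algebra_simps)
      also have "x + x = 0" using two by (metis mult_2 mult_zero_left)
      finally show ?thesis by simp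
    qed
    have s3: "inverse (1/(1+x)) + 1 = x"
    proof -
      have "inverse (1/(1+x)) + 1 = x + (1 + 1)" by (simp add: algebra_simps)
      thus ?thesis using c2 by simp
    qed
    have "cf 1 0 [1,1,1] x = inverse (inverse (inverse x + 1) + 1) + 1" by (simp add: cf_def)
    also have "\<dots> = x" using s1 s2 s3 by simp
    finally show ?thesis using 3 by (simp add: transpose_def)
  qed
qed

lemma inCF_transp:
  fixes a b :: "'a::field"
  assumes c2: "(1::'a) + 1 = 0" and ab: "a \<noteq> b"
  shows "inCF (transpose a b)"
proof -
  have d: "b - a \<noteq> 0" using ab by simp
  have lin: "\<And>x. (x - a)/(b - a) = inverse (b-a) * x + (- a * inverse (b-a))"
    using d by (simp add: divide_inverse algebra_simps)
  have eq: "\<And>x. transpose a b x = (b-a) * transpose 0 1 ((x-a)/(b-a)) + a"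
  proof -
    fix x
    consider "x = a" | "x = b" | "x \<noteq> a" "x \<noteq> b" by blast
    then show "transpose a b x = (b-a) * transpose 0 1 ((x-a)/(b-a)) + a"
    proof cases
      case 1 then show ?thesis using d by (simp add: transpose_def)
    next
      case 2 then show ?thesis using d ab by (simp add: transpose_def)
    next
      case 3
      have "(x-a)/(b-a) \<noteq> 0" using 3 d by simp
      moreover have "(x-a)/(b-a) \<noteq> 1" using 3 d by (simp add: field_simps)
      ultimately show ?thesis using 3 d by (simp add: transpose_def)
    qed
  qed
  have i0: "inverse (b-a) \<noteq> 0" using d by simp
  have "1 * inverse (b-a) \<noteq> 0" using d by simp
  from cf_affine_post[OF this d, of "[1,1,1]" "1 * (- a * inverse (b-a)) + 0" a]
  obtain c0 c1 cs where c: "c0 \<noteq> 0"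
    "\<forall>x. (b-a) * cf (1 * inverse (b-a)) (1 * (- a * inverse (b-a)) + 0) [1,1,1] x + a = cf c0 c1 cs x"
    by blast
  have "transpose a b = cf c0 c1 cs"
  proof
    fix x
    have "transpose a b x = (b-a) * cf 1 0 [1,1,1] (inverse (b-a) * x + (- a * inverse (b-a))) + a"
      using eq[of x] lin[of x] transp01[OF c2] by simp
    also have "\<dots> = cf c0 c1 cs x" using c(2) by (simp only: cf_inner)
    finally show "transpose a b x = cf c0 c1 cs x" .
  qed
  thus ?thesis using c(1) unfolding inCF_def by blast
qed

lemma bij_inCF:
  fixes F :: "'a::{field,finite} \<Rightarrow> 'a"
  assumes c2: "(1::'a) + 1 = 0" and bij: "bij F"
  shows "inCF F"
proof -
  have "F permutes UNIV" using bij by (simp add: permutes_univ bij_iff)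
  moreover have "finite (UNIV::'a set)" by simp
  ultimately show ?thesis
  proof (induction rule: permutes_induct)
    case id
    have "id = cf (1::'a) 0 []" by (rule ext) simp
    then show ?case unfolding inCF_def using one_neq_zero by blast
  next
    case (swap a b p)
    show ?case using inCF_comp inCF_transp[OF c2] swap by blast
  qed
qed

lemma normalize:
  fixes a0 :: "'a::field"
  shows "a0 \<noteq> 0 \<Longrightarrow> \<exists>b0 b1 bs. b0 \<noteq> 0 \<and> (\<forall>i. i + 1 < length bs \<longrightarrow> bs ! i \<noteq> 0) \<and> cf a0 a1 as = cf b0 b1 bs"
proof (induction "length as" arbitrary: a0 a1 as rule: less_induct)
  case less
  show ?case
  proof (cases "\<forall>i. i + 1 < length as \<longrightarrow> as ! i \<noteq> 0")
    case True
    then show ?thesis using less.prems by blast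
  next
    case False
    then obtain i where i: "i + 1 < length as" "as ! i = 0" by blast
    define xs where "xs = take i as"
    define e where "e = as ! (i+1)"
    define ys where "ys = drop (i+2) as"
    have "drop i as = as ! i # drop (Suc i) as" using i(1) by (simp add: Cons_nth_drop_Suc)
    moreover have "drop (Suc i) as = as ! (Suc i) # drop (Suc (Suc i)) as" using i(1) by (simp add: Cons_nth_drop_Suc)
    ultimately have "drop i as = 0 # e # ys" using i(2) unfolding e_def ys_def by simp
    hence as_eq: "as = xs @ 0 # e # ys" unfolding xs_def by (metis append_take_drop_id)
    obtain c0 c1 cs where c: "c0 \<noteq> 0" "length cs = length xs" "\<forall>x. 1 * cf a0 a1 xs x + e = cf c0 c1 cs x"
      using cf_affine_post[OF less.prems, where u=1 and as=xs and v=e] by (simp, blast)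
    have eqf: "cf a0 a1 as = cf c0 c1 (cs @ ys)"
    proof
      fix x
      have "cf a0 a1 as x = foldl (\<lambda>y a. inverse y + a) (cf a0 a1 xs x + e) ys"
        unfolding as_eq cf_append by simp
      also have "\<dots> = cf c0 c1 (cs @ ys) x" using c(3) by (simp add: cf_append)
      finally show "cf a0 a1 as x = cf c0 c1 (cs @ ys) x" .
    qed
    have "length (cs @ ys) < length as" using c(2) as_eq by simp
    from less.hyps[OF this c(1)] obtain b0 b1 bs where
      "b0 \<noteq> 0" "\<forall>i. i + 1 < length bs \<longrightarrow> bs ! i \<noteq> 0" "cf c0 c1 (cs @ ys) = cf b0 b1 bs" by blast
    then show ?thesis using eqf by metis
  qed
qed


theorem mainTheorem5:
  fixes F :: "'a::{field,finite} \<Rightarrow> 'a" and c :: 'a and n m :: nat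
  assumes "n \<ge> 1"
    and "CARD('a) = 2 ^ n"
    and "bij F"
    and "carlitz_rank F = m"
    and "c \<noteq> 1"
  shows "c_diff_uniformity F c \<le> m + 2"
proof -
  define S where "S = {c_diff_count F c a b | a b. a \<noteq> 0 \<or> c \<noteq> 1}"
  have Sne: "S \<noteq> {}" unfolding S_def using assms(5) by blast
  have Sfin: "finite S"
  proof -
    have "S \<subseteq> (\<lambda>(a,b). c_diff_count F c a b) ` UNIV" unfolding S_def by auto
    thus ?thesis by (rule finite_subset) simp
  qed
  have bound: "\<And>a b. c_diff_count F c a b \<le> m + 2"
  proof -
    fix a b
    show "c_diff_count F c a b \<le> m + 2"
    proof (cases "n = 1")
      case True
      have "c_diff_count F c a b \<le> card (UNIV::'a set)"
        unfolding c_diff_count_def by (rule card_mono) simp_all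
      thus ?thesis using assms(2) True by simp
    next
      case False
      hence "n \<ge> 2" using assms(1) by simp
      hence "(2::nat) ^ 2 \<le> 2 ^ n" by (rule power_increasing) simp
      hence card3: "CARD('a) \<ge> 3" using assms(2) by simp
      have c2: "\<And>x::'a. x + x = 0" using char2 assms(1,2) by blast
      have c21: "(1::'a) + 1 = 0" by (rule c2)
      obtain a0 a1 as where f: "a0 \<noteq> 0" "F = cf a0 a1 as"
        using bij_inCF[OF c21 assms(3)] unfolding inCF_def by blast
      obtain b0 b1 bs where g: "b0 \<noteq> 0" "\<forall>i. i + 1 < length bs \<longrightarrow> bs ! i \<noteq> 0" "cf a0 a1 as = cf b0 b1 bs"
        using normalize[OF f(1)] by blast
      have "has_carlitz_rep F (length bs)"
        unfolding has_carlitz_rep_def carlitz_cf[OF card3] using g f by blast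
      hence "has_carlitz_rep F (carlitz_rank F)"
        unfolding carlitz_rank_def by (rule LeastI)
      then obtain d0 d1 ds where d: "d0 \<noteq> 0" "length ds = m" "F = cf d0 d1 ds"
        unfolding has_carlitz_rep_def carlitz_cf[OF card3] assms(4) by blast
      have tr: "- c + 1 \<noteq> 0" using assms(5)
        by (metis add.commute add_uminus_conv_diff eq_iff_diff_eq_0)
      have seteq: "{x. F (x + a) + c * F x = b} = {x. rel (- c) b 0 1 (F x) (F (x + a))}"
      proof (rule Collect_cong)
        fix x
        show "(F (x + a) + c * F x = b) = rel (- c) b 0 1 (F x) (F (x + a))"
          unfolding rel_def by (auto simp: algebra_simps eq_diff_eq)
      qed
      have "card {x. rel (- c) b 0 1 (cf d0 d1 ds x) (cf d0 d1 ds (x + a))} \<le> length ds + 2"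
        by (rule main_bound[OF c2 d(1) tr])
      thus ?thesis unfolding c_diff_count_def seteq using d by simp
    qed
  qed
  show ?thesis unfolding c_diff_uniformity_def S_def[symmetric]
    using Sfin Sne bound unfolding S_def by (auto simp: Max_le_iff)
qed

end
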